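(* Let $\mathbb G=V_1\times V_2$ be a step-two Carnot group and $f\in\mathcal A_h(\mathbb G)$. Then $f$ is $\Sigma$-affine, i.e. for every $(x,z)\in\mathbb G$ and every $(x',z')\in\Sigma$, the map $t\in\mathbb R\mapsto f((x,z)\cdot(tx',tz'))$ is affine.
   Context: A step-two Carnot group is $\mathbb G=V_1\times V_2$, where $V_1,V_2$ are finite-dimensional real vector spaces with $V_2\neq\{0\}$, equipped with a bilinear skew-symmetric map $[\cdot,\cdot]:V_1\times V_1\to V_2$ with $\operatorname{span}\{[x,x']:x,x'\in V_1\}=V_2$, and group law $(x,z)\cdot(x',z')=(x+x',z+z'+[x,x'])$. $\mathcal A_h(\mathbb G)$ is the space of $h$-affine maps $f:\mathbb G\to\mathbb R$, i.e. such that for all $(x,z)\in\mathbb G$, $y\in V_1$, $t\mapsto f((x,z)\cdot(ty,0))$ is affine. For $x,y\in V_1$, $\operatorname{Lie}(x,y):=\operatorname{span}\{x,y\}\times\operatorname{span}\{[x,y]\}\subset\mathbb G$, and $\Sigma:=\bigcup_{x,y\in V_1}\operatorname{Lie}(x,y)$. *)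

theory Defs
  imports "HOL-Analysis.Analysis"
begin

text \<open>A step-two Carnot group: V1 = 'a, V2 = 'b (finite-dimensional real vector spaces,
  nontrivial since euclidean_space types have positive dimension), with bracket br.\<close>

definition step2_carnot :: "('a::euclidean_space \<Rightarrow> 'a \<Rightarrow> 'b::euclidean_space) \<Rightarrow> bool" where
  "step2_carnot br \<longleftrightarrow> bilinear br \<and> (\<forall>x y. br x y = - br y x)
     \<and> span {br x x' | x x'. True} = UNIV"

definition cmult :: "('a::real_vector \<Rightarrow> 'a \<Rightarrow> 'b::real_vector) \<Rightarrow> 'a \<times> 'b \<Rightarrow> 'a \<times> 'b \<Rightarrow> 'a \<times> 'b" where
  "cmult br p q = (fst p + fst q, snd p + snd q + br (fst p) (fst q))"

definition affine_fun :: "(real \<Rightarrow> real) \<Rightarrow> bool" where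
  "affine_fun g \<longleftrightarrow> (\<exists>a b. \<forall>t. g t = a + b * t)"

definition h_affine :: "('a::real_vector \<Rightarrow> 'a \<Rightarrow> 'b::real_vector) \<Rightarrow> ('a \<times> 'b \<Rightarrow> real) \<Rightarrow> bool" where
  "h_affine br f \<longleftrightarrow> (\<forall>p y. affine_fun (\<lambda>t. f (cmult br p (t *\<^sub>R y, 0))))"

definition LieSub :: "('a::real_vector \<Rightarrow> 'a \<Rightarrow> 'b::real_vector) \<Rightarrow> 'a \<Rightarrow> 'a \<Rightarrow> ('a \<times> 'b) set" where
  "LieSub br x y = span {x, y} \<times> span {br x y}"

definition Sigma_set :: "('a::real_vector \<Rightarrow> 'a \<Rightarrow> 'b::real_vector) \<Rightarrow> ('a \<times> 'b) set" where
  "Sigma_set br = (\<Union>x. \<Union>y. LieSub br x y)"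

end

theory Submission
  imports Defs
begin


lemma aff_eval: "affine_fun g \<Longrightarrow> g t = g 0 + t * (g 1 - g 0)"
  unfolding affine_fun_def by auto

lemma aff_of: "(\<And>t. g t = a + t * b) \<Longrightarrow> affine_fun g"
  unfolding affine_fun_def by (metis mult.commute)

definition HH :: "(real \<Rightarrow> real \<Rightarrow> real \<Rightarrow> real) \<Rightarrow> bool" where
  "HH G \<longleftrightarrow> (\<forall>s u v a b. affine_fun (\<lambda>t. G (s+t* a) (u+t* b) (v+t* (s* b-u* a))))"

lemma Hlin:
  assumes "HH G" "X = s+t* a" "Y = u+t* b" "Z = v+t* (s* b-u* a)"
  shows "G X Y Z = G s u v + t* (G (s+a) (u+b) (v+(s* b-u* a)) - G s u v)"
proof -
  have "affine_fun (\<lambda>t. G (s+t* a) (u+t* b) (v+t* (s* b-u* a)))" using assms(1) unfolding HH_def by blast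
  from aff_eval[OF this, of t] assms(2-4) show ?thesis by simp
qed

lemma H3:
  assumes "HH G"
  shows "G (s+a) (u+b) (v+(s* b-u* a)) + G (s-a) (u-b) (v-(s* b-u* a)) = 2 * G s u v"
proof -
  have "G (s-a) (u-b) (v-(s* b-u* a)) = G s u v + (-1)* (G (s+a) (u+b) (v+(s* b-u* a)) - G s u v)"
    by (rule Hlin[OF assms]) (simp_all add: algebra_simps)
  then show ?thesis by simp
qed

lemma L1:
  assumes "HH G"
  shows "G s u v = G s u 0 + v * (G s u 1 - G s u 0)"
proof -
  define A0 where "A0 = G (s+1) u (-u)"
  define A1 where "A1 = G (s+1) (u+1) (-u+(s+1)) - A0"
  define B0 where "B0 = G (s-1) u u"
  define B1 where "B1 = G (s-1) (u-1) (u+(1-s)) - B0"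
  have A: "G (s+1) (u+w) (w+s* w-u) = A0 + w* A1" for w
    using Hlin[OF assms, where s="s+1" and a=0 and u=u and b=1 and v="-u" and t=w and X="s+1" and Y="u+w" and Z="w+s* w-u"]
    unfolding A0_def A1_def by (simp add: algebra_simps)
  have B: "G (s-1) (u-w) (w-s* w+u) = B0 + w* B1" for w
    using Hlin[OF assms, where s="s-1" and a=0 and u=u and b="-1" and v="u" and t=w and X="s-1" and Y="u-w" and Z="w-s* w+u"]
    unfolding B0_def B1_def by (simp add: algebra_simps)
  have C: "G (s+1) (u+w) (w+s* w-u) + G (s-1) (u-w) (w-s* w+u) = 2 * G s u w" for w
    using H3[OF assms, of s 1 u w w] by (simp add: algebra_simps)
  have "2 * G s u w = A0 + B0 + w * (A1 + B1)" for w
    using A[of w] B[of w] C[of w] by (simp add: algebra_simps)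
  from this[of v] this[of 0] this[of 1]
  have e: "2 * G s u v = 2 * G s u 0 + v * (2 * G s u 1 - 2 * G s u 0)" by (simp add: algebra_simps)
  have "v * (2 * G s u 1 - 2 * G s u 0) = 2 * (v * (G s u 1 - G s u 0))" by (simp add: algebra_simps)
  with e show ?thesis by linarith
qed


lemma Core:
  assumes "HH G"
  shows "G 1 0 1 - G 1 0 0 = G 0 0 1 - G 0 0 0"
proof -
  define A where "A = (\<lambda>s u. G s u 0)"
  define B where "B = (\<lambda>s u. G s u 1 - G s u 0)"
  have L: "G s u v = A s u + v * B s u" for s u v
    unfolding A_def B_def by (rule L1[OF assms])
  have r0: "G (0+1) ((-1)+1) (0+(0*1-(-1)*1)) + G (0-1) ((-1)-1) (0-(0*1-(-1)*1)) = 2 * G 0 (-1) 0"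
    by (rule H3[OF assms])
  have r1: "G (0+1) ((-1)+1) ((-1)+(0*1-(-1)*1)) + G (0-1) ((-1)-1) ((-1)-(0*1-(-1)*1)) = 2 * G 0 (-1) (-1)"
    by (rule H3[OF assms])
  have r2: "G ((-1)+1) ((-2)+0) ((-1)+((-1)*0-(-2)*1)) + G ((-1)-1) ((-2)-0) ((-1)-((-1)*0-(-2)*1)) = 2 * G (-1) (-2) (-1)"
    by (rule H3[OF assms])
  have r3: "G ((-1)+1) ((-1)+0) ((-1)+((-1)*0-(-1)*1)) + G ((-1)-1) ((-1)-0) ((-1)-((-1)*0-(-1)*1)) = 2 * G (-1) (-1) (-1)"
    by (rule H3[OF assms])
  have r4: "G ((-2)+0) ((-1)+1) ((-1)+((-2)*1-(-1)*0)) + G ((-2)-0) ((-1)-1) ((-1)-((-2)*1-(-1)*0)) = 2 * G (-2) (-1) (-1)"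
    by (rule H3[OF assms])
  have r5: "G ((-1)+1) ((-1)+(-1)) ((-1)+((-1)* (-1)-(-1)*1)) + G ((-1)-1) ((-1)-(-1)) ((-1)-((-1)* (-1)-(-1)*1)) = 2 * G (-1) (-1) (-1)"
    by (rule H3[OF assms])
  have r6: "G ((-1)+1) ((-1)+0) (0+((-1)*0-(-1)*1)) + G ((-1)-1) ((-1)-0) (0-((-1)*0-(-1)*1)) = 2 * G (-1) (-1) 0"
    by (rule H3[OF assms])
  have r7: "G ((-2)+0) ((-1)+1) (0+((-2)*1-(-1)*0)) + G ((-2)-0) ((-1)-1) (0-((-2)*1-(-1)*0)) = 2 * G (-2) (-1) 0"
    by (rule H3[OF assms])
  have r8: "G ((-1)+1) ((-1)+(-1)) (0+((-1)* (-1)-(-1)*1)) + G ((-1)-1) ((-1)-(-1)) (0-((-1)* (-1)-(-1)*1)) = 2 * G (-1) (-1) 0"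
    by (rule H3[OF assms])
  have r9: "G (0+1) ((-1)+(-1)) ((-1)+(0* (-1)-(-1)*1)) + G (0-1) ((-1)-(-1)) ((-1)-(0* (-1)-(-1)*1)) = 2 * G 0 (-1) (-1)"
    by (rule H3[OF assms])
  have r10: "G (0+1) ((-2)+0) (0+(0*0-(-2)*1)) + G (0-1) ((-2)-0) (0-(0*0-(-2)*1)) = 2 * G 0 (-2) 0"
    by (rule H3[OF assms])
  have r11: "G (0+1) ((-2)+0) ((-1)+(0*0-(-2)*1)) + G (0-1) ((-2)-0) ((-1)-(0*0-(-2)*1)) = 2 * G 0 (-2) (-1)"
    by (rule H3[OF assms])
  have r12: "G ((-1)+0) ((-1)+1) ((-1)+((-1)*1-(-1)*0)) + G ((-1)-0) ((-1)-1) ((-1)-((-1)*1-(-1)*0)) = 2 * G (-1) (-1) (-1)"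
    by (rule H3[OF assms])
  have r13: "G ((-1)+1) ((-1)+1) ((-1)+((-1)*1-(-1)*1)) + G ((-1)-1) ((-1)-1) ((-1)-((-1)*1-(-1)*1)) = 2 * G (-1) (-1) (-1)"
    by (rule H3[OF assms])
  have r14: "G ((-1)+1) ((-2)+0) (0+((-1)*0-(-2)*1)) + G ((-1)-1) ((-2)-0) (0-((-1)*0-(-2)*1)) = 2 * G (-1) (-2) 0"
    by (rule H3[OF assms])
  have r15: "G ((-1)+1) ((-1)+1) (0+((-1)*1-(-1)*1)) + G ((-1)-1) ((-1)-1) (0-((-1)*1-(-1)*1)) = 2 * G (-1) (-1) 0"
    by (rule H3[OF assms])
  note rs = r0 r1 r2 r3 r4 r5 r6 r7 r8 r9 r10 r11 r12 r13 r14 r15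
  have "B 1 0 = B 0 0"
    using rs unfolding L by simp
  then show ?thesis unfolding B_def by simp
qed


lemma HH_lin:
  assumes "HH G"
  shows "HH (\<lambda>s u v. G (m11* s + m12* u) (m21* s + m22* u) ((m11* m22 - m12* m21)* v))"
  unfolding HH_def
proof (intro allI)
  fix s u v a b :: real
  have "affine_fun (\<lambda>t. G ((m11* s + m12* u)+t* (m11* a + m12* b)) ((m21* s + m22* u)+t* (m21* a + m22* b))
          ((m11* m22 - m12* m21)* v + t* ((m11* s + m12* u)* (m21* a + m22* b) - (m21* s + m22* u)* (m11* a + m12* b))))"
    using assms unfolding HH_def by blast
  moreover have "(\<lambda>t. G ((m11* s + m12* u)+t* (m11* a + m12* b)) ((m21* s + m22* u)+t* (m21* a + m22* b))
          ((m11* m22 - m12* m21)* v + t* ((m11* s + m12* u)* (m21* a + m22* b) - (m21* s + m22* u)* (m11* a + m12* b))))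
     = (\<lambda>t. G (m11* (s+t* a) + m12* (u+t* b)) (m21* (s+t* a) + m22* (u+t* b)) ((m11* m22 - m12* m21)* (v+t* (s* b-u* a))))"
    by (rule ext) (simp add: algebra_simps)
  ultimately show "affine_fun (\<lambda>t. G (m11* (s+t* a) + m12* (u+t* b)) (m21* (s+t* a) + m22* (u+t* b)) ((m11* m22 - m12* m21)* (v+t* (s* b-u* a))))"
    by simp
qed

lemma Bconst:
  assumes "HH G"
  shows "G p q 1 - G p q 0 = G 0 0 1 - G 0 0 0"
proof (cases "p = 0 \<and> q = 0")
  case True then show ?thesis by simp
next
  case False
  define d where "d = p* p + q* q"
  have d: "d \<noteq> 0" using False unfolding d_def
    by (simp add: sum_squares_eq_zero_iff)
  have "HH (\<lambda>s u v. G (p* s + (-q)* u) (q* s + p* u) ((p* p - (-q)* q)* v))"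
    by (rule HH_lin[OF assms])
  from Core[OF this] have "G p q d - G p q 0 = G 0 0 d - G 0 0 0"
    unfolding d_def by simp
  moreover have "G p q d = G p q 0 + d * (G p q 1 - G p q 0)" by (rule L1[OF assms])
  moreover have "G 0 0 d = G 0 0 0 + d * (G 0 0 1 - G 0 0 0)" by (rule L1[OF assms])
  ultimately have "d * (G p q 1 - G p q 0) = d * (G 0 0 1 - G 0 0 0)" by simp
  with d show ?thesis by simp
qed

lemma mainG:
  assumes "HH G"
  shows "affine_fun (\<lambda>t. G (t* a) (t* b) (t* c))"
proof (rule aff_of)
  fix t
  have "G (t* a) (t* b) (t* c) = G (t* a) (t* b) 0 + (t* c) * (G (t* a) (t* b) 1 - G (t* a) (t* b) 0)"
    by (rule L1[OF assms])
  also have "G (t* a) (t* b) 1 - G (t* a) (t* b) 0 = G 0 0 1 - G 0 0 0" by (rule Bconst[OF assms])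
  also have "G (t* a) (t* b) 0 = G 0 0 0 + t * (G (0+a) (0+b) (0+(0* b-0* a)) - G 0 0 0)"
    by (rule Hlin[OF assms]) simp_all
  finally show "G (t* a) (t* b) (t* c) = G 0 0 0 + t * ((G a b 0 - G 0 0 0) + c * (G 0 0 1 - G 0 0 0))"
    by (simp add: algebra_simps)
qed




lemma skew0:
  assumes "step2_carnot br"
  shows "br x x = 0" and "br y x = - br x y"
proof -
  have "br x x = - br x x" using assms unfolding step2_carnot_def by blast
  then have "(2::real) *\<^sub>R br x x = 0" by (simp add: scaleR_2 eq_neg_iff_add_eq_0)
  then show "br x x = 0" by simp
  show "br y x = - br x y" using assms unfolding step2_carnot_def by blast
qed

lemma HH_f:
  fixes br :: "'a::euclidean_space \<Rightarrow> 'a \<Rightarrow> 'b::euclidean_space"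
  assumes st: "step2_carnot br" and ha: "h_affine br f"
  shows "HH (\<lambda>s u v. f (cmult br p (s *\<^sub>R x + u *\<^sub>R y, v *\<^sub>R br x y)))"
  unfolding HH_def
proof (intro allI)
  fix s u v a b :: real
  have bl: "bilinear br" using st unfolding step2_carnot_def by blast
  have xx: "br x x = 0" and yy: "br y y = 0" and yx: "br y x = - br x y"
    using skew0(1)[OF st, of x] skew0(1)[OF st, of y] skew0(2)[OF st, of y x] by simp_all
  have "affine_fun (\<lambda>t. f (cmult br (cmult br p (s *\<^sub>R x + u *\<^sub>R y, v *\<^sub>R br x y)) (t *\<^sub>R (a *\<^sub>R x + b *\<^sub>R y), 0)))"
    using ha unfolding h_affine_def by blast
  moreover have "cmult br (cmult br p (s *\<^sub>R x + u *\<^sub>R y, v *\<^sub>R br x y)) (t *\<^sub>R (a *\<^sub>R x + b *\<^sub>R y), 0)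
     = cmult br p ((s + t * a) *\<^sub>R x + (u + t * b) *\<^sub>R y, (v + t * (s * b - u * a)) *\<^sub>R br x y)" for t
  proof -
    let ?X = "s *\<^sub>R x + u *\<^sub>R y" and ?H = "t *\<^sub>R (a *\<^sub>R x + b *\<^sub>R y)"
    have e1: "br ?X ?H = (t * (s * b - u * a)) *\<^sub>R br x y"
      by (simp add: bilinear_ladd[OF bl] bilinear_radd[OF bl] bilinear_lmul[OF bl] bilinear_rmul[OF bl]
        xx yy yx scaleR_diff_right scaleR_diff_left right_diff_distrib ac_simps)
    have e2: "br (fst p + ?X) ?H = br (fst p) ?H + br ?X ?H" by (rule bilinear_ladd[OF bl])
    have e3: "br (fst p) (?X + ?H) = br (fst p) ?X + br (fst p) ?H" by (rule bilinear_radd[OF bl])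
    have e4: "?X + ?H = (s + t * a) *\<^sub>R x + (u + t * b) *\<^sub>R y"
      by (simp add: scaleR_add_left scaleR_add_right)
    have e5: "(v + t * (s * b - u * a)) *\<^sub>R br x y = v *\<^sub>R br x y + (t * (s * b - u * a)) *\<^sub>R br x y"
      by (rule scaleR_add_left)
    show ?thesis unfolding cmult_def fst_conv snd_conv e2 e1 e4[symmetric] e3 e5
      by (simp add: ac_simps)
  qed
  ultimately show "affine_fun (\<lambda>t. f (cmult br p ((s + t * a) *\<^sub>R x + (u + t * b) *\<^sub>R y, (v + t * (s * b - u * a)) *\<^sub>R br x y)))"
    by simp
qed

lemma span2:
  assumes "z \<in> span {x, y}"
  shows "\<exists>a b. z = a *\<^sub>R x + b *\<^sub>R y"
proof -
  from assms obtain k where "z - k *\<^sub>R x \<in> span {y}" unfolding span_insert by blast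
  then obtain m where "z - k *\<^sub>R x = m *\<^sub>R y" unfolding span_singleton by blast
  then have "z = k *\<^sub>R x + m *\<^sub>R y" by (simp add: algebra_simps)
  then show ?thesis by blast
qed

theorem proposition3p7:
  fixes br :: "'a::euclidean_space \<Rightarrow> 'a \<Rightarrow> 'b::euclidean_space"
    and f :: "'a \<times> 'b \<Rightarrow> real"
  assumes "step2_carnot br"
    and "h_affine br f"
  shows "\<forall>p. \<forall>q \<in> Sigma_set br. affine_fun (\<lambda>t. f (cmult br p (t *\<^sub>R fst q, t *\<^sub>R snd q)))"
proof (intro allI ballI)
  fix p q
  assume "q \<in> Sigma_set br"
  then obtain x y where "q \<in> LieSub br x y" unfolding Sigma_set_def by blast
  then have q1: "fst q \<in> span {x, y}" and q2: "snd q \<in> span {br x y}"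
    unfolding LieSub_def by (auto simp: mem_Times_iff)
  from span2[OF q1] obtain a b where a: "fst q = a *\<^sub>R x + b *\<^sub>R y" by blast
  from q2 obtain c where c: "snd q = c *\<^sub>R br x y" unfolding span_singleton by blast
  have "affine_fun (\<lambda>t. f (cmult br p ((t * a) *\<^sub>R x + (t * b) *\<^sub>R y, (t * c) *\<^sub>R br x y)))"
    using mainG[OF HH_f[OF assms, of p x y]] by simp
  moreover have "(t * a) *\<^sub>R x + (t * b) *\<^sub>R y = t *\<^sub>R fst q" "(t * c) *\<^sub>R br x y = t *\<^sub>R snd q" for t
    using a c by (simp_all add: algebra_simps)
  ultimately show "affine_fun (\<lambda>t. f (cmult br p (t *\<^sub>R fst q, t *\<^sub>R snd q)))" by simp
qed

end
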